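(* Let $(G,u)$ be a unital $\ell$-group and $M=\Gamma(G,u)$, and suppose every non-zero element of $M$ is a strong unit of $G$. Then $M$ is an MV-algebra, and for every unital Riesz space $(R,1_R)$ the set of $(R,1_R)$-states on $M$ is non-empty, every $(R,1_R)$-state $s$ on $M$ is an $(R,1_R)$-state-morphism, and $\mathrm{Ker}(s)$ is a maximal ideal of $M$. If moreover $(R,1_R)$ is Archimedean, then $M$ has exactly one $(R,1_R)$-state.
   Context: For a unital $\ell$-group $(G,u)$ ($\ell$-group, not necessarily abelian, with strong unit $u$), $\Gamma(G,u)=[0,u]$ with $x\oplus y=(x+y)\wedge u$, $x^-=u-x$, $x^\sim=-x+u$, $x\odot y=(x-u+y)\vee0$ is a pseudo MV-algebra; it is an MV-algebra iff $\oplus$ is commutative. Partial addition: $x+y$ defined iff $x\odot y=0$, then $x+y=x\oplus y$. Ideal: nonempty down-set closed under $\oplus$; maximal = maximal among proper ideals. A unital Riesz space $(R,1_R)$ is a Riesz space with fixed strong unit; Archimedean if $na\le b$ for all $n$ implies $a\le0$. $\Gamma(R,1_R)$ is the MV-algebra on $[0,1_R]$. An $(R,1_R)$-state on $M$ is a map $s:M\to[0,1_R]$ with $s(1)=1_R$, $s(x+y)=s(x)+s(y)$ whenever $x+y$ defined; an $(R,1_R)$-state-morphism is a homomorphism $M\to\Gamma(R,1_R)$. $\mathrm{Ker}(s)=\{x:s(x)=0\}$. *)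

theory Defs
  imports Complex_Main
begin

fun nmul :: "nat \<Rightarrow> 'a::monoid_add \<Rightarrow> 'a" where
  "nmul 0 x = 0"
| "nmul (Suc n) x = x + nmul n x"

definition lgroup :: "'g::{group_add,lattice} itself \<Rightarrow> bool" where
  "lgroup _ \<longleftrightarrow> (\<forall>a b c :: 'g. a \<le> b \<longrightarrow> c + a \<le> c + b \<and> a + c \<le> b + c)"

definition strong_unit :: "'g::{group_add,lattice} \<Rightarrow> bool" where
  "strong_unit u \<longleftrightarrow> 0 < u \<and> (\<forall>g. \<exists>n. g \<le> nmul n u)"

definition unital_lgroup :: "'g::{group_add,lattice} \<Rightarrow> bool" where
  "unital_lgroup u \<longleftrightarrow> lgroup TYPE('g) \<and> strong_unit u"

definition Gam :: "'g::{group_add,lattice} \<Rightarrow> 'g set" where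
  "Gam u = {x. 0 \<le> x \<and> x \<le> u}"

definition gam_oplus :: "'g::{group_add,lattice} \<Rightarrow> 'g \<Rightarrow> 'g \<Rightarrow> 'g" where
  "gam_oplus u x y = inf (x + y) u"

definition gam_negl :: "'g::{group_add,lattice} \<Rightarrow> 'g \<Rightarrow> 'g" where
  "gam_negl u x = u - x"

definition gam_negr :: "'g::{group_add,lattice} \<Rightarrow> 'g \<Rightarrow> 'g" where
  "gam_negr u x = - x + u"

definition gam_odot :: "'g::{group_add,lattice} \<Rightarrow> 'g \<Rightarrow> 'g \<Rightarrow> 'g" where
  "gam_odot u x y = sup (x - u + y) 0"

text \<open>Gamma(G,u) is an MV-algebra iff oplus is commutative\<close>
definition gam_is_MV :: "'g::{group_add,lattice} \<Rightarrow> bool" where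
  "gam_is_MV u \<longleftrightarrow> (\<forall>x\<in>Gam u. \<forall>y\<in>Gam u. gam_oplus u x y = gam_oplus u y x)"

definition gam_ideal :: "'g::{group_add,lattice} \<Rightarrow> 'g set \<Rightarrow> bool" where
  "gam_ideal u I \<longleftrightarrow> I \<subseteq> Gam u \<and> I \<noteq> {} \<and>
     (\<forall>x\<in>I. \<forall>y\<in>Gam u. y \<le> x \<longrightarrow> y \<in> I) \<and>
     (\<forall>x\<in>I. \<forall>y\<in>I. gam_oplus u x y \<in> I)"

definition gam_maximal_ideal :: "'g::{group_add,lattice} \<Rightarrow> 'g set \<Rightarrow> bool" where
  "gam_maximal_ideal u I \<longleftrightarrow> gam_ideal u I \<and> I \<noteq> Gam u \<and>
     (\<forall>J. gam_ideal u J \<and> J \<noteq> Gam u \<and> I \<subseteq> J \<longrightarrow> J = I)"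

definition riesz_unit :: "'r::{ordered_real_vector,lattice} \<Rightarrow> bool" where
  "riesz_unit e \<longleftrightarrow> 0 < e \<and> (\<forall>a. \<exists>n::nat. a \<le> real n *\<^sub>R e)"

definition riesz_archimedean :: "'r::{ordered_real_vector,lattice} itself \<Rightarrow> bool" where
  "riesz_archimedean _ \<longleftrightarrow> (\<forall>a b :: 'r. (\<forall>n::nat. real n *\<^sub>R a \<le> b) \<longrightarrow> a \<le> 0)"

text \<open>(R,1_R)-state on Gamma(G,u): partial addition x+y is defined iff x odot y = 0,
  and then equals x oplus y\<close>
definition R_state :: "'g::{group_add,lattice} \<Rightarrow> 'r::{ordered_real_vector,lattice}
    \<Rightarrow> ('g \<Rightarrow> 'r) \<Rightarrow> bool" where
  "R_state u e s \<longleftrightarrow> (\<forall>x\<in>Gam u. s x \<in> Gam e) \<and> s u = e \<and>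
     (\<forall>x\<in>Gam u. \<forall>y\<in>Gam u. gam_odot u x y = 0 \<longrightarrow> s (gam_oplus u x y) = s x + s y)"

definition R_state_morphism :: "'g::{group_add,lattice} \<Rightarrow> 'r::{ordered_real_vector,lattice}
    \<Rightarrow> ('g \<Rightarrow> 'r) \<Rightarrow> bool" where
  "R_state_morphism u e s \<longleftrightarrow> (\<forall>x\<in>Gam u. s x \<in> Gam e) \<and> s 0 = 0 \<and>
     (\<forall>x\<in>Gam u. \<forall>y\<in>Gam u. s (gam_oplus u x y) = gam_oplus e (s x) (s y)) \<and>
     (\<forall>x\<in>Gam u. s (gam_negl u x) = gam_negl e (s x)) \<and>
     (\<forall>x\<in>Gam u. s (gam_negr u x) = gam_negr e (s x))"

definition state_ker :: "'g::{group_add,lattice} \<Rightarrow> ('g \<Rightarrow> 'r::zero) \<Rightarrow> 'g set" where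
  "state_ker u s = {x\<in>Gam u. s x = 0}"

end

theory Submission
  imports Defs
begin


lemma nmul_add: "nmul (m+n) x = nmul m x + nmul n (x::'a::monoid_add)"
  by (induct m) (simp_all add: add.assoc)

lemma nmul_mult: "nmul (m*n) x = nmul m (nmul n (x::'a::monoid_add))"
  by (induct m) (simp_all add: nmul_add)

lemma nmul_one[simp]: "nmul (Suc 0) x = (x::'a::monoid_add)" by simp

locale hyp =
  fixes u :: "'g::{group_add,lattice}"
  assumes unital: "unital_lgroup u"
  and su: "\<forall>x\<in>Gam u. x \<noteq> 0 \<longrightarrow> strong_unit x"
begin

lemma lmono: "a \<le> b \<Longrightarrow> c + a \<le> c + (b::'g)"
  using unital unfolding unital_lgroup_def lgroup_def by blast
lemma rmono: "a \<le> b \<Longrightarrow> a + c \<le> b + (c::'g)"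
  using unital unfolding unital_lgroup_def lgroup_def by blast
lemma amono: "a \<le> b \<Longrightarrow> c \<le> d \<Longrightarrow> a + c \<le> b + (d::'g)"
  by (meson order_trans lmono rmono)
lemma lcancel: "c + a \<le> c + b \<Longrightarrow> a \<le> (b::'g)"
  using lmono[of "c+a" "c+b" "-c"] by (simp add: add.assoc[symmetric])
lemma rcancel: "a + c \<le> b + c \<Longrightarrow> a \<le> (b::'g)"
  using rmono[of "a+c" "b+c" "-c"] by (simp add: add.assoc)
lemma lcancel_iff[simp]: "c + a \<le> c + b \<longleftrightarrow> a \<le> (b::'g)"
  using lcancel lmono by blast
lemma rcancel_iff[simp]: "a + c \<le> b + c \<longleftrightarrow> a \<le> (b::'g)"
  using rcancel rmono by blast
lemma neg_anti: "a \<le> b \<Longrightarrow> -b \<le> -(a::'g)"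
proof -
  assume "a \<le> b"
  hence "-b + a + -a \<le> -b + b + -a" using lmono rmono by blast
  thus ?thesis by (simp add: add.assoc)
qed

lemma u_pos: "0 < u" and u_su: "\<exists>n. g \<le> nmul n u"
  using unital unfolding unital_lgroup_def strong_unit_def by auto

lemma inf_add_left: "c + inf a b = inf (c + a) (c + (b::'g))"
proof (rule antisym)
  show "c + inf a b \<le> inf (c+a) (c+b)" by (simp add: lmono)
  have "-c + inf (c+a) (c+b) \<le> a" using lmono[of "inf (c+a) (c+b)" "c+a" "-c"]
    by (simp add: add.assoc[symmetric])
  moreover have "-c + inf (c+a) (c+b) \<le> b" using lmono[of "inf (c+a) (c+b)" "c+b" "-c"]
    by (simp add: add.assoc[symmetric])
  ultimately have "-c + inf (c+a) (c+b) \<le> inf a b" by simp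
  hence "c + (-c + inf (c+a) (c+b)) \<le> c + inf a b" by (rule lmono)
  thus "inf (c+a) (c+b) \<le> c + inf a b" by (simp add: add.assoc[symmetric])
qed

lemma inf_add_right: "inf a b + c = inf (a + c) (b + (c::'g))"
proof (rule antisym)
  show "inf a b + c \<le> inf (a+c) (b+c)" by (simp add: rmono)
  have "inf (a+c) (b+c) + -c \<le> a" using rmono[of "inf (a+c) (b+c)" "a+c" "-c"]
    by (simp add: add.assoc)
  moreover have "inf (a+c) (b+c) + -c \<le> b" using rmono[of "inf (a+c) (b+c)" "b+c" "-c"]
    by (simp add: add.assoc)
  ultimately have "inf (a+c) (b+c) + -c \<le> inf a b" by simp
  hence "inf (a+c) (b+c) + -c + c \<le> inf a b + c" by (rule rmono)
  thus "inf (a+c) (b+c) \<le> inf a b + c" by (simp add: add.assoc)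
qed

lemma nmul_nonneg: "0 \<le> x \<Longrightarrow> 0 \<le> nmul n (x::'g)"
  by (induct n) (auto intro: order_trans[OF _ amono[of 0 x 0]])

lemma nmul_mono: "x \<le> y \<Longrightarrow> nmul n x \<le> nmul n (y::'g)"
  by (induct n) (auto intro: amono)

lemma nmul_mono_n: "0 \<le> x \<Longrightarrow> m \<le> n \<Longrightarrow> nmul m x \<le> nmul n (x::'g)"
proof -
  assume x: "0 \<le> x" and "m \<le> n"
  then obtain k where n: "n = m + k" using le_Suc_ex by blast
  have "nmul m x + 0 \<le> nmul m x + nmul k x" using nmul_nonneg[OF x] lmono by blast
  thus ?thesis by (simp add: n nmul_add)
qed

lemma key_disj: "0 \<le> x \<Longrightarrow> 0 \<le> y \<Longrightarrow> 0 \<le> z \<Longrightarrow> inf x z = 0 \<Longrightarrow> inf (x + y) z \<le> inf y (z::'g)"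
proof -
  assume x: "0 \<le> x" and y: "0 \<le> y" and z: "0 \<le> z" and d: "inf x z = 0"
  have "z \<le> z + y" using lmono[OF y, of z] by simp
  hence "inf (x+y) z \<le> inf (x+y) (z+y)" using inf_mono by blast
  also have "\<dots> = inf x z + y" by (simp add: inf_add_right)
  also have "\<dots> = y" by (simp add: d)
  finally show ?thesis by simp
qed

lemma disj_nmul: "0 \<le> a \<Longrightarrow> 0 \<le> b \<Longrightarrow> inf a b = 0 \<Longrightarrow> inf (nmul n a) (b::'g) = 0"
proof (induct n)
  case 0 thus ?case by (simp add: inf_absorb1)
next
  case (Suc n)
  have "inf (a + nmul n a) b \<le> inf (nmul n a) b"
    using key_disj[of a "nmul n a" b] Suc nmul_nonneg by blast
  moreover have "0 \<le> inf (a + nmul n a) b" using Suc nmul_nonneg amono[of 0 a 0 "nmul n a"] by simp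
  ultimately show ?case using Suc by simp
qed

lemma disj_zero: "0 \<le> a \<Longrightarrow> 0 \<le> b \<Longrightarrow> inf a b = 0 \<Longrightarrow> b \<le> nmul n a \<Longrightarrow> b = (0::'g)"
  using disj_nmul[of a b n] by (metis inf.absorb_iff2 inf_commute)

lemma gam_nz_su: "0 \<le> x \<Longrightarrow> x \<le> u \<Longrightarrow> x \<noteq> 0 \<Longrightarrow> \<exists>n. g \<le> nmul n x"
  using su unfolding Gam_def strong_unit_def by auto

lemma disj_pos: "0 \<le> p \<Longrightarrow> 0 \<le> q \<Longrightarrow> inf p q = 0 \<Longrightarrow> p = 0 \<or> q = (0::'g)"
proof (rule ccontr)
  assume p: "0 \<le> p" and q: "0 \<le> q" and d: "inf p q = 0" and nz: "\<not> (p = 0 \<or> q = 0)"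
  have up: "0 \<le> u" using u_pos by simp
  have "inf p u \<noteq> 0"
  proof
    assume "inf p u = 0"
    moreover obtain n where "p \<le> nmul n u" using u_su by blast
    ultimately have "p = 0" using disj_zero[of u p n] up p by (simp add: inf_commute)
    thus False using nz by simp
  qed
  then obtain n where n: "q \<le> nmul n (inf p u)" using gam_nz_su[of "inf p u"] p up by auto
  have "inf (inf p u) q \<le> inf p q" by (simp add: inf.coboundedI1 le_infI2)
  hence "inf (inf p u) q = 0" using d p q up by (simp add: antisym)
  hence "q = 0" using disj_zero[OF _ q _ n] p up by simp
  thus False using nz by simp
qed

lemma lin: "a \<le> b \<or> b \<le> (a::'g)"
proof -
  define m where "m = inf a b"
  have p: "0 \<le> -m + a" using lmono[of m a "-m"] by (simp add: m_def)
  have q: "0 \<le> -m + b" using lmono[of m b "-m"] by (simp add: m_def)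
  have "inf (-m + a) (-m + b) = -m + m" by (simp add: inf_add_left m_def)
  hence "inf (-m + a) (-m + b) = 0" by simp
  from disj_pos[OF p q this] have "a = m \<or> b = m"
    by (metis add.assoc add_right_cancel add.right_neutral add_minus_cancel)
  thus ?thesis unfolding m_def by (metis inf.cobounded1 inf.cobounded2)
qed


lemma not_less_le: "\<not> x < y \<Longrightarrow> y \<le> (x::'g)"
  using lin[of x y] by (auto simp: less_le)

lemma lsmono: "a < b \<Longrightarrow> c + a < c + (b::'g)"
  by (simp add: less_le lmono)
lemma rsmono: "a < b \<Longrightarrow> a + c < b + (c::'g)"
  by (simp add: less_le rmono)
lemma asmono: "a < b \<Longrightarrow> c \<le> d \<Longrightarrow> a + c < b + (d::'g)"
  by (meson less_le_trans lmono rsmono)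
lemma asmono2: "a \<le> b \<Longrightarrow> c < d \<Longrightarrow> a + c < b + (d::'g)"
  by (meson le_less_trans lsmono rmono)

lemma arch: "0 < a \<Longrightarrow> \<exists>n. b \<le> nmul n (a::'g)"
proof -
  assume a: "0 < a"
  show ?thesis
  proof (cases "a \<le> u")
    case True thus ?thesis using gam_nz_su[of a b] a by auto
  next
    case False
    hence "u \<le> a" using lin by blast
    moreover obtain n where "b \<le> nmul n u" using u_su by blast
    ultimately show ?thesis by (meson nmul_mono order_trans)
  qed
qed

lemma floor_ex: "0 \<le> x \<Longrightarrow> 0 < c \<Longrightarrow> \<exists>m. nmul m c \<le> x \<and> x < nmul (Suc m) (c::'g)"
proof -
  assume x: "0 \<le> x" and c: "0 < c"
  obtain k where k: "x \<le> nmul k c" using arch[OF c] by blast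
  have "nmul k c < c + nmul k c" using rsmono[OF c, of "nmul k c"] by simp
  hence P: "x < nmul (Suc k) c" using k by simp
  have "\<not> x < nmul 0 c" using x by auto
  from ex_least_nat_less[where P="\<lambda>i. x < nmul i c", OF P this]
  obtain m where "\<forall>i\<le>m. \<not> x < nmul i c" "x < nmul (Suc m) c" by blast
  thus ?thesis using not_less_le by blast
qed

lemma nmul_comm: "nmul m x + nmul n x = nmul n x + nmul m (x::'g)"
  by (metis nmul_add add.commute)

lemma comm_nonneg_A: "0 < a \<Longrightarrow> \<forall>g::'g. 0 < g \<longrightarrow> a \<le> g \<Longrightarrow> 0 \<le> x \<Longrightarrow> \<exists>k. x = nmul k (a::'g)"
proof -
  assume a: "0 < a" and l: "\<forall>g::'g. 0 < g \<longrightarrow> a \<le> g" and x: "0 \<le> x"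
  obtain m where m: "nmul m a \<le> x" "x < nmul (Suc m) a" using floor_ex[OF x a] by blast
  have "nmul (Suc m) a = nmul m a + a" using nmul_add[of m 1 a] by (simp add: add.commute)
  hence "-nmul m a + x < a" using lsmono[OF m(2), of "-nmul m a"] by (simp add: add.assoc[symmetric])
  moreover have "0 \<le> -nmul m a + x" using lmono[OF m(1), of "-nmul m a"] by simp
  ultimately have "-nmul m a + x = 0" using l by (metis less_le less_le_not_le)
  hence "x = nmul m a" by (metis add_minus_cancel add.right_neutral)
  thus ?thesis by blast
qed

lemma halve: "\<forall>a::'g. 0 < a \<longrightarrow> (\<exists>g. 0 < g \<and> g < a) \<Longrightarrow> 0 < e \<Longrightarrow> \<exists>c. 0 < c \<and> c + c \<le> (e::'g)"
proof -
  assume h: "\<forall>a::'g. 0 < a \<longrightarrow> (\<exists>g. 0 < g \<and> g < a)" and e: "0 < e"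
  obtain b where b: "0 < b" "b < e" using h e by blast
  define c where "c = e + -b"
  have cb: "c + b = e" by (simp add: c_def add.assoc)
  have c: "0 < c" using rsmono[OF b(2), of "-b"] by (simp add: c_def)
  show ?thesis
  proof (cases "c \<le> b")
    case True thus ?thesis using c cb lmono[OF True, of c] by auto
  next
    case False hence "b \<le> c" using lin by blast
    thus ?thesis using b cb rmono[of b c b] by auto
  qed
qed

lemma comm_B_aux: "\<forall>a::'g. 0 < a \<longrightarrow> (\<exists>g. 0 < g \<and> g < a) \<Longrightarrow> 0 \<le> x \<Longrightarrow> 0 \<le> y \<Longrightarrow> \<not> y + x < x + (y::'g)"
proof
  assume h: "\<forall>a::'g. 0 < a \<longrightarrow> (\<exists>g. 0 < g \<and> g < a)" and x: "0 \<le> x" and y: "0 \<le> y"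
    and lt: "y + x < x + y"
  define e where "e = (x + y) + -(y + x)"
  have e: "0 < e" using rsmono[OF lt, of "-(y+x)"] by (simp add: e_def)
  obtain c where c: "0 < c" "c + c \<le> e" using halve[OF h e] by blast
  obtain m where m: "nmul m c \<le> x" "x < nmul (Suc m) c" using floor_ex[OF x c(1)] by blast
  obtain n where n: "nmul n c \<le> y" "y < nmul (Suc n) c" using floor_ex[OF y c(1)] by blast
  have "x + y < nmul (Suc m) c + nmul (Suc n) c" using asmono[OF m(2) less_imp_le[OF n(2)]] .
  moreover have "nmul (Suc m) c + nmul (Suc n) c = nmul (2 + (m + n)) c"
    using nmul_add[of "Suc m" "Suc n" c, symmetric] by (simp add: add.commute)
  ultimately have 1: "x + y < nmul (2 + (m + n)) c" by simp
  have "nmul (n + m) c \<le> y + x" using amono[OF n(1) m(1)] by (simp add: nmul_add)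
  hence 2: "-(y + x) \<le> - nmul (m + n) c" using neg_anti by (simp add: add.commute)
  have "e < nmul (2 + (m + n)) c + - nmul (m + n) c" unfolding e_def using asmono[OF 1 2] .
  also have "\<dots> = c + c"
  proof -
    have "nmul (2 + (m + n)) c = (c + c) + nmul (m + n) c"
      using nmul_add[of 2 "m+n" c] by (simp add: numeral_2_eq_2 add.assoc)
    thus ?thesis by (metis add.assoc add.right_neutral right_minus)
  qed
  finally show False using c(2) by simp
qed

lemma comm_nonneg: "0 \<le> x \<Longrightarrow> 0 \<le> y \<Longrightarrow> x + y = y + (x::'g)"
proof (cases "\<exists>a::'g. 0 < a \<and> (\<forall>g. 0 < g \<longrightarrow> a \<le> g)")
  case True
  assume x: "0 \<le> x" and y: "0 \<le> y"
  then obtain a :: 'g where a: "0 < a" "\<forall>g. 0 < g \<longrightarrow> a \<le> g" using True by blast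
  obtain i where i: "x = nmul i a" using comm_nonneg_A[OF a x] by blast
  obtain j where j: "y = nmul j a" using comm_nonneg_A[OF a y] by blast
  show ?thesis unfolding i j by (rule nmul_comm)
next
  case False
  assume x: "0 \<le> x" and y: "0 \<le> y"
  have h: "\<forall>a::'g. 0 < a \<longrightarrow> (\<exists>g. 0 < g \<and> g < a)"
  proof (intro allI impI)
    fix a :: 'g assume "0 < a"
    then obtain g where "0 < g" "\<not> a \<le> g" using False by blast
    thus "\<exists>g. 0 < g \<and> g < a" using not_less_le by blast
  qed
  have 1: "\<not> y + x < x + y" by (rule comm_B_aux[OF h x y])
  have 2: "\<not> x + y < y + x" by (rule comm_B_aux[OF h y x])
  show ?thesis using 1 2 lin[of "x+y" "y+x"] by (simp add: less_le) (metis antisym)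
qed

lemma comm: "x + y = y + (x::'g)"
proof -
  have neg: "0 \<le> -z" if "z \<le> 0" for z :: 'g using neg_anti[OF that] by simp
  have A: "x + y = y + x" if "-x + y = y + -x" for x y :: 'g
  proof -
    have "x + (-x + y) + x = x + (y + -x) + x" by (simp only: that)
    moreover have "x + (-x + y) + x = y + x" by (simp only: add_minus_cancel)
    moreover have "x + (y + -x) + x = x + y" by (simp only: add.assoc left_minus add_0_right)
    ultimately show ?thesis by simp
  qed
  have B: "x + y = y + x" if "-x + -y = -y + -x" for x y :: 'g
  proof -
    have "-(y + x) = -(x + y)" by (simp only: minus_add that)
    thus ?thesis by simp
  qed
  consider "0 \<le> x" "0 \<le> y" | "x \<le> 0" "0 \<le> y" | "0 \<le> x" "y \<le> 0" | "x \<le> 0" "y \<le> 0"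
    using lin by blast
  thus ?thesis
  proof cases
    case 1 thus ?thesis by (rule comm_nonneg)
  next
    case 2 thus ?thesis using A[of x y] comm_nonneg[of "-x" y] neg by blast
  next
    case 3 thus ?thesis using A[of y x] comm_nonneg[of x "-y"] neg by simp
  next
    case 4 thus ?thesis using B[of x y] comm_nonneg[of "-x" "-y"] neg by blast
  qed
qed

end


context hyp begin
lemma lcomm: "a + (b + c) = b + (a + (c::'g))"
  by (metis add.assoc comm)
lemma id1: "x + (y - x) = (y::'g)" by (metis comm diff_add_cancel)
lemma id2: "x + (a + r) = a + (x + (r::'g))" by (rule lcomm)
lemma id3: "u + a + (x + r - u) = a + (x + (r::'g))"
  by (metis add.assoc comm diff_add_cancel)
lemma id4: "(u - x) + (x + r - u) = (r::'g)"
  by (metis add.assoc comm diff_add_cancel add_diff_cancel)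
lemma id5: "(x + y) - x = (y::'g)"
  by (metis comm add_diff_cancel)

lemma isMV: "gam_is_MV u"
  unfolding gam_is_MV_def gam_oplus_def by (simp add: comm)

lemma nmul_distrib: "nmul n (x + y) = nmul n x + nmul n (y::'g)"
  by (induct n) (simp_all add: add.assoc lcomm)

lemma nmul_less_imp: "nmul a u < nmul b u \<Longrightarrow> a < b"
  using nmul_mono_n[of u b a] u_pos by (metis leI less_le_not_le less_imp_le)

lemma nmul_le_imp: "nmul a u \<le> nmul b u \<Longrightarrow> a \<le> b"
proof (rule ccontr)
  assume h: "nmul a u \<le> nmul b u" "\<not> a \<le> b"
  hence "Suc b \<le> a" by simp
  hence "nmul (Suc b) u \<le> nmul a u" by (intro nmul_mono_n) (use u_pos in auto)
  moreover have "nmul b u < u + nmul b u" using rsmono[OF u_pos, of "nmul b u"] by simp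
  ultimately show False using h(1) by simp
qed

definition phi :: "'g \<Rightarrow> real" where
  "phi x = Sup {real q / real n | q n. 0 < n \<and> nmul q u \<le> nmul n x}"

lemma compare: "0 < n \<Longrightarrow> 0 < n' \<Longrightarrow> nmul q u \<le> nmul n z \<Longrightarrow> nmul n' z \<le> nmul m' u
   \<Longrightarrow> real q / real n \<le> real m' / real n'"
proof -
  assume n: "0 < n" "0 < n'" and a: "nmul q u \<le> nmul n z" and b: "nmul n' z \<le> nmul m' u"
  have "nmul (n' * q) u \<le> nmul (n' * n) z" unfolding nmul_mult using nmul_mono[OF a] .
  also have "\<dots> = nmul n (nmul n' z)" by (simp add: nmul_mult[symmetric] mult.commute)
  also have "\<dots> \<le> nmul (n * m') u" unfolding nmul_mult using nmul_mono[OF b] .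
  finally have "n' * q \<le> n * m'" by (rule nmul_le_imp)
  hence "real n' * real q \<le> real n * real m'" by (metis of_nat_le_iff of_nat_mult)
  thus ?thesis using n by (simp add: divide_simps mult.commute)
qed

lemma phi_set_bdd: "0 \<le> z \<Longrightarrow> bdd_above {real q / real n | q n. 0 < n \<and> nmul q u \<le> nmul n z}"
proof -
  assume z: "0 \<le> z"
  obtain k where k: "z \<le> nmul k u" using u_su by blast
  show ?thesis unfolding bdd_above_def
    using compare[of _ 1 _ z k] k by auto
qed

lemma phi_lower: "0 \<le> z \<Longrightarrow> 0 < n \<Longrightarrow> nmul q u \<le> nmul n z \<Longrightarrow> real q / real n \<le> phi z"
  unfolding phi_def by (rule cSup_upper) (auto intro: phi_set_bdd)

lemma phi_upper: "0 \<le> z \<Longrightarrow> 0 < n \<Longrightarrow> nmul n z \<le> nmul m u \<Longrightarrow> phi z \<le> real m / real n"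
  unfolding phi_def
proof (rule cSup_least)
  assume "0 \<le> z"
  hence "nmul 0 u \<le> nmul 1 z" by simp
  thus "{real q / real n | q n. 0 < n \<and> nmul q u \<le> nmul n z} \<noteq> {}" by blast
next
  fix x assume "0 \<le> z" "0 < n" "nmul n z \<le> nmul m u"
    "x \<in> {real q / real n | q n. 0 < n \<and> nmul q u \<le> nmul n z}"
  thus "x \<le> real m / real n" using compare by blast
qed

lemma real_eq_lemma: "(\<And>n::nat. 0 < n \<Longrightarrow> \<bar>a\<bar> \<le> 2 / real n) \<Longrightarrow> a = (0::real)"
proof (rule ccontr)
  assume h: "\<And>n::nat. 0 < n \<Longrightarrow> \<bar>a\<bar> \<le> 2 / real n" and a: "a \<noteq> 0"
  obtain n :: nat where n: "2 / \<bar>a\<bar> < real n" using reals_Archimedean2 by blast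
  have "0 < 2 / \<bar>a\<bar>" using a by simp
  hence np: "0 < n" using n by linarith
  have "\<bar>a\<bar> \<le> 2 / real n" using h[OF np] .
  hence "real n * \<bar>a\<bar> \<le> 2" using np by (simp add: field_simps)
  moreover have "2 < real n * \<bar>a\<bar>" using n a by (simp add: field_simps)
  ultimately show False by simp
qed

lemma floor_u: "0 \<le> z \<Longrightarrow> \<exists>q. nmul q u \<le> z \<and> z < nmul (Suc q) u"
  using floor_ex u_pos by blast

lemma lin_aux: "(A::real) \<le> px \<Longrightarrow> px \<le> A + d \<Longrightarrow> B \<le> py \<Longrightarrow> py \<le> B + d \<Longrightarrow> A + B \<le> pxy
   \<Longrightarrow> pxy \<le> A + B + 2 * d \<Longrightarrow> \<bar>pxy - (px + py)\<bar> \<le> 2 * d"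
  by (simp add: abs_le_iff)

lemma phi_add: "0 \<le> x \<Longrightarrow> 0 \<le> y \<Longrightarrow> phi (x + y) = phi x + phi y"
proof -
  assume x: "0 \<le> x" and y: "0 \<le> y"
  have xy: "0 \<le> x + y" using amono[OF x y] by simp
  have "phi (x + y) - (phi x + phi y) = 0"
  proof (rule real_eq_lemma)
    fix n :: nat assume n: "0 < n"
    obtain q1 where q1: "nmul q1 u \<le> nmul n x" "nmul n x < nmul (Suc q1) u"
      using floor_u[OF nmul_nonneg[OF x]] by blast
    obtain q2 where q2: "nmul q2 u \<le> nmul n y" "nmul n y < nmul (Suc q2) u"
      using floor_u[OF nmul_nonneg[OF y]] by blast
    have a1: "real q1 / n \<le> phi x" "phi x \<le> real (Suc q1) / n"
      using phi_lower[OF x n q1(1)] phi_upper[OF x n less_imp_le[OF q1(2)]] by auto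
    have a2: "real q2 / n \<le> phi y" "phi y \<le> real (Suc q2) / n"
      using phi_lower[OF y n q2(1)] phi_upper[OF y n less_imp_le[OF q2(2)]] by auto
    have "nmul (q1 + q2) u \<le> nmul n (x + y)"
      unfolding nmul_add nmul_distrib using amono[OF q1(1) q2(1)] .
    hence b1: "real (q1 + q2) / n \<le> phi (x + y)" using phi_lower[OF xy n] by blast
    have "nmul n (x + y) \<le> nmul (Suc q1 + Suc q2) u"
      unfolding nmul_add nmul_distrib using amono[OF less_imp_le[OF q1(2)] less_imp_le[OF q2(2)]] .
    hence b2: "phi (x + y) \<le> real (Suc q1 + Suc q2) / n" using phi_upper[OF xy n] by blast
    have e1: "real (q1 + q2) / real n = real q1 / real n + real q2 / real n" by (simp add: add_divide_distrib)
    have e2: "real (Suc q1 + Suc q2) / real n = real q1 / real n + real q2 / real n + 2 * (1 / real n)"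
      by (simp add: add_divide_distrib)
    have e3: "real (Suc q1) / real n = real q1 / real n + 1 / real n" "real (Suc q2) / real n = real q2 / real n + 1 / real n"
      by (simp_all add: add_divide_distrib)
    have a1u: "phi x \<le> real q1 / real n + 1 / real n" using a1(2) unfolding e3(1) .
    have a2u: "phi y \<le> real q2 / real n + 1 / real n" using a2(2) unfolding e3(2) .
    have b1': "real q1 / real n + real q2 / real n \<le> phi (x + y)" using b1 unfolding e1 .
    have b2': "phi (x + y) \<le> real q1 / real n + real q2 / real n + 2 * (1 / real n)" using b2 unfolding e2 .
    have "\<bar>phi (x + y) - (phi x + phi y)\<bar> \<le> 2 * (1 / real n)"
      by (rule lin_aux[OF a1(1) a1u a2(1) a2u b1' b2'])
    thus "\<bar>phi (x + y) - (phi x + phi y)\<bar> \<le> 2 / real n" by simp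
  qed
  thus ?thesis by simp
qed

end


context hyp begin

lemma gam_iff: "x \<in> Gam u \<longleftrightarrow> 0 \<le> x \<and> x \<le> u" by (simp add: Gam_def)

lemma zero_gam: "0 \<in> Gam u" using u_pos by (simp add: gam_iff)
lemma u_gam: "u \<in> Gam u" using u_pos by (simp add: gam_iff)

lemma odot_zero: "x + y \<le> u \<Longrightarrow> gam_odot u x y = 0"
proof -
  assume h: "x + y \<le> u"
  have "x - u + y = x + y + -u" by (metis add.assoc comm diff_conv_add_uminus)
  also have "\<dots> \<le> u + -u" using rmono[OF h] .
  finally have "x - u + y \<le> 0" by simp
  thus ?thesis unfolding gam_odot_def by (simp add: sup_absorb2)
qed

lemma odot_zero_imp: "gam_odot u x y = 0 \<Longrightarrow> x + y \<le> u"
proof -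
  assume "gam_odot u x y = 0"
  hence "x - u + y \<le> 0" unfolding gam_odot_def by (metis sup.cobounded1)
  moreover have "x - u + y = x + y + -u" by (metis add.assoc comm diff_conv_add_uminus)
  ultimately have "x + y + -u + u \<le> 0 + u" using rmono by metis
  thus ?thesis by (simp add: add.assoc)
qed

lemma oplus_le: "x + y \<le> u \<Longrightarrow> gam_oplus u x y = x + y"
  unfolding gam_oplus_def by (simp add: inf_absorb1)
lemma oplus_ge: "u \<le> x + y \<Longrightarrow> gam_oplus u x y = u"
  unfolding gam_oplus_def by (simp add: inf_absorb2)

lemma diff_gam: "x \<in> Gam u \<Longrightarrow> y \<in> Gam u \<Longrightarrow> x \<le> y \<Longrightarrow> y - x \<in> Gam u"
proof -
  assume x: "x \<in> Gam u" and y: "y \<in> Gam u" and xy: "x \<le> y"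
  have "x + -x \<le> y + -x" using rmono[OF xy] .
  hence 1: "0 \<le> y - x" by simp
  have "-x \<le> 0" using neg_anti[of 0 x] x by (simp add: gam_iff)
  hence "y + -x \<le> y + 0" using lmono by blast
  hence "y - x \<le> y" by simp
  thus ?thesis using 1 y by (auto simp: gam_iff)
qed

lemma gam_add_le: "x \<in> Gam u \<Longrightarrow> y \<in> Gam u \<Longrightarrow> x + y \<le> u \<Longrightarrow> x + y \<in> Gam u"
  using amono[of 0 x 0 y] by (simp add: gam_iff)

lemma st_gam: "R_state u e s \<Longrightarrow> x \<in> Gam u \<Longrightarrow> 0 \<le> s x \<and> s x \<le> e"
  unfolding R_state_def Gam_def by auto

lemma st_u: "R_state u e s \<Longrightarrow> s u = e"
  unfolding R_state_def by auto

lemma st_add: "R_state u e s \<Longrightarrow> x \<in> Gam u \<Longrightarrow> y \<in> Gam u \<Longrightarrow> x + y \<le> u \<Longrightarrow> s (x + y) = s x + s y"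
  unfolding R_state_def using odot_zero oplus_le by metis

lemma st_zero: "R_state u e s \<Longrightarrow> s 0 = 0"
proof -
  assume s: "R_state u e s"
  have "s (0 + 0) = s 0 + s 0" using st_add[OF s zero_gam zero_gam] u_pos by simp
  thus ?thesis by simp
qed

lemma st_mono: "R_state u e s \<Longrightarrow> x \<in> Gam u \<Longrightarrow> y \<in> Gam u \<Longrightarrow> x \<le> y \<Longrightarrow> s x \<le> s y"
proof -
  assume s: "R_state u e s" and x: "x \<in> Gam u" and y: "y \<in> Gam u" and xy: "x \<le> y"
  have d: "y - x \<in> Gam u" by (rule diff_gam[OF x y xy])
  have "x + (y - x) = y" by (rule id1)
  hence "s y = s x + s (y - x)" using st_add[OF s x d] y by (simp add: gam_iff)
  moreover have "0 \<le> s (y - x)" using st_gam[OF s d] by simp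
  ultimately show ?thesis by simp
qed

lemma st_compl: "R_state u e s \<Longrightarrow> x \<in> Gam u \<Longrightarrow> s (u - x) = e - s x"
proof -
  assume s: "R_state u e s" and x: "x \<in> Gam u"
  have d: "u - x \<in> Gam u" using diff_gam[OF x u_gam] x by (simp add: gam_iff)
  have "s (x + (u - x)) = s x + s (u - x)" using st_add[OF s x d] by (simp add: id1)
  hence "e = s x + s (u - x)" using st_u[OF s] by (simp add: id1)
  thus ?thesis by (simp add: algebra_simps)
qed

lemma st_oplus: "R_state u e s \<Longrightarrow> x \<in> Gam u \<Longrightarrow> y \<in> Gam u \<Longrightarrow>
   s (gam_oplus u x y) = gam_oplus e (s x) (s y)"
proof -
  assume s: "R_state u e s" and x: "x \<in> Gam u" and y: "y \<in> Gam u"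
  show ?thesis
  proof (cases "x + y \<le> u")
    case True
    hence "s (gam_oplus u x y) = s x + s y" using st_add[OF s x y] oplus_le by simp
    moreover have "s x + s y \<le> e" using st_add[OF s x y True] st_gam[OF s gam_add_le[OF x y True]] by simp
    ultimately show ?thesis unfolding gam_oplus_def[of e] by (simp add: inf_absorb1)
  next
    case False
    hence ge: "u \<le> x + y" using lin by blast
    have z: "u - x \<in> Gam u" using diff_gam[OF x u_gam] x by (simp add: gam_iff)
    have "u - x \<le> (x + y) - x" using rmono[OF ge, of "-x"] by (simp only: diff_conv_add_uminus)
    hence zy: "u - x \<le> y" by (simp add: id5)
    have "s x + s (u - x) = e" using st_add[OF s x z] st_u[OF s] by (simp add: id1)
    moreover have "s (u - x) \<le> s y" by (rule st_mono[OF s z y zy])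
    ultimately have "e \<le> s x + s y" by (metis add_left_mono)
    thus ?thesis using oplus_ge[OF ge] st_u[OF s] unfolding gam_oplus_def[of e] by (simp add: inf_absorb2)
  qed
qed

lemma st_morph: "R_state u e s \<Longrightarrow> R_state_morphism u e s"
proof -
  assume s: "R_state u e s"
  have negr: "gam_negr u x = gam_negl u x" for x
    unfolding gam_negr_def gam_negl_def by (metis comm diff_conv_add_uminus)
  have negr': "gam_negr e a = gam_negl e a" for a
    unfolding gam_negr_def gam_negl_def by (simp add: algebra_simps)
  show ?thesis unfolding R_state_morphism_def
    using s st_zero[OF s] st_oplus[OF s] st_compl[OF s]
    unfolding negr negr' gam_negl_def by (auto simp: R_state_def)
qed

end


context hyp begin

lemma st_decomp: "R_state u e s \<Longrightarrow> x \<in> Gam u \<Longrightarrow>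
  \<exists>q r. nmul n x = nmul q u + r \<and> r \<in> Gam u \<and> r < u \<and> real n *\<^sub>R s x = real q *\<^sub>R e + s r"
proof (induct n)
  case 0
  have "nmul 0 x = nmul 0 u + 0 \<and> 0 \<in> Gam u \<and> 0 < u \<and> real 0 *\<^sub>R s x = real 0 *\<^sub>R e + s 0"
    using zero_gam u_pos st_zero[OF 0(1)] by simp
  thus ?case by blast
next
  case (Suc n)
  note s = Suc(2) and x = Suc(3)
  obtain q r where qr: "nmul n x = nmul q u + r" "r \<in> Gam u" "r < u" "real n *\<^sub>R s x = real q *\<^sub>R e + s r"
    using Suc by blast
  have ns: "nmul (Suc n) x = nmul q u + (x + r)" using qr(1) by (simp add: id2)
  show ?case
  proof (cases "x + r < u")
    case True
    have g: "x + r \<in> Gam u" using gam_add_le[OF x qr(2)] True by (simp add: less_le)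
    have "s (x + r) = s x + s r" using st_add[OF s x qr(2)] True by (simp add: less_le)
    hence "real (Suc n) *\<^sub>R s x = real q *\<^sub>R e + s (x + r)"
      using qr(4) by (simp add: algebra_simps)
    thus ?thesis using ns g True by blast
  next
    case False
    hence ge: "u \<le> x + r" using not_less_le by blast
    define r' where "r' = x + r - u"
    have ns': "nmul (Suc n) x = nmul (Suc q) u + r'" unfolding ns r'_def by (simp add: id3)
    have r'0: "0 \<le> r'" using rmono[OF ge, of "-u"] by (simp add: r'_def)
    have "x + r < u + u" using asmono2[of x u r u] x qr(3) by (simp add: gam_iff)
    hence "x + r + -u < u + u + -u" by (rule rsmono)
    hence r'u: "r' < u" by (simp add: r'_def add.assoc)
    have r'g: "r' \<in> Gam u" using r'0 r'u by (simp add: gam_iff less_le)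
    have z: "u - x \<in> Gam u" using diff_gam[OF x u_gam] x by (simp add: gam_iff)
    have rr: "(u - x) + r' = r" unfolding r'_def by (rule id4)
    have "s r = s (u - x) + s r'" using st_add[OF s z r'g] rr qr(2) by (simp add: gam_iff)
    hence "s r = e - s x + s r'" using st_compl[OF s x] by simp
    hence "real (Suc n) *\<^sub>R s x = real (Suc q) *\<^sub>R e + s r'"
      using qr(4) by (simp add: algebra_simps)
    thus ?thesis using ns' r'g r'u by blast
  qed
qed

lemma st_bounds: "R_state u e s \<Longrightarrow> x \<in> Gam u \<Longrightarrow> nmul q u \<le> nmul n x \<Longrightarrow> nmul n x < nmul (Suc q) u
  \<Longrightarrow> real q *\<^sub>R e \<le> real n *\<^sub>R s x \<and> real n *\<^sub>R s x \<le> real (Suc q) *\<^sub>R e"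
proof -
  assume s: "R_state u e s" and x: "x \<in> Gam u" and l: "nmul q u \<le> nmul n x" and h: "nmul n x < nmul (Suc q) u"
  obtain q' r where qr: "nmul n x = nmul q' u + r" "r \<in> Gam u" "r < u" "real n *\<^sub>R s x = real q' *\<^sub>R e + s r"
    using st_decomp[OF s x] by blast
  have "nmul q' u + 0 \<le> nmul q' u + r" using lmono[of 0 r "nmul q' u"] qr(2) by (simp add: gam_iff)
  hence l': "nmul q' u \<le> nmul n x" using qr(1) by simp
  have "nmul q' u + r < nmul q' u + u" using lsmono[OF qr(3)] .
  hence h': "nmul n x < nmul (Suc q') u" using qr(1) by (simp add: comm)
  have "q < Suc q'" using nmul_less_imp le_less_trans[OF l h'] by blast
  moreover have "q' < Suc q" using nmul_less_imp le_less_trans[OF l' h] by blast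
  ultimately have qq: "q' = q" by simp
  have sr: "0 \<le> s r" "s r \<le> e" using st_gam[OF s qr(2)] by auto
  have "real q *\<^sub>R e \<le> real q *\<^sub>R e + s r" using sr by simp
  moreover have "real q *\<^sub>R e + s r \<le> real (Suc q) *\<^sub>R e" using sr by (simp add: algebra_simps)
  ultimately show ?thesis using qr(4) qq by simp
qed

lemma st_unique: "riesz_archimedean TYPE('r::{ordered_real_vector,lattice}) \<Longrightarrow> R_state u (e::'r) s1 \<Longrightarrow> R_state u e s2
  \<Longrightarrow> x \<in> Gam u \<Longrightarrow> s1 x \<le> s2 x"
proof -
  assume ar: "riesz_archimedean TYPE('r)" and s1: "R_state u e s1" and s2: "R_state u e s2" and x: "x \<in> Gam u"
  have "\<forall>n::nat. real n *\<^sub>R (s1 x - s2 x) \<le> e"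
  proof
    fix n :: nat
    have "0 \<le> nmul n x" using x nmul_nonneg by (simp add: gam_iff)
    then obtain q where q: "nmul q u \<le> nmul n x" "nmul n x < nmul (Suc q) u" using floor_u by blast
    have b1: "real n *\<^sub>R s1 x \<le> real (Suc q) *\<^sub>R e" using st_bounds[OF s1 x q] by simp
    have b2: "real q *\<^sub>R e \<le> real n *\<^sub>R s2 x" using st_bounds[OF s2 x q] by simp
    have "real n *\<^sub>R s1 x - real n *\<^sub>R s2 x \<le> real (Suc q) *\<^sub>R e - real q *\<^sub>R e"
      by (rule diff_mono[OF b1 b2])
    thus "real n *\<^sub>R (s1 x - s2 x) \<le> e" by (simp add: algebra_simps)
  qed
  hence "s1 x - s2 x \<le> 0" using ar unfolding riesz_archimedean_def by blast
  thus ?thesis by simp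
qed

lemma t_suc: "x \<in> Gam u \<Longrightarrow> inf (nmul (Suc k) x) u = gam_oplus u x (inf (nmul k x) u)"
proof -
  assume x: "x \<in> Gam u"
  have "u \<le> x + u" using rmono[of 0 x u] x by (simp add: gam_iff)
  thus ?thesis unfolding gam_oplus_def by (simp add: inf_add_left inf_assoc inf_absorb2)
qed

lemma t_gam: "x \<in> Gam u \<Longrightarrow> inf (nmul k x) u \<in> Gam u"
  using nmul_nonneg[of x k] u_pos by (simp add: gam_iff)

lemma st_ker: "riesz_unit e \<Longrightarrow> R_state u e s \<Longrightarrow> state_ker u s = {0}"
proof -
  assume e: "riesz_unit e" and s: "R_state u e s"
  have e0: "0 < e" using e by (simp add: riesz_unit_def)
  have "x = 0" if x: "x \<in> Gam u" and sx: "s x = 0" for x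
  proof (rule ccontr)
    assume nz: "x \<noteq> 0"
    obtain n where n: "u \<le> nmul n x" using gam_nz_su[of x u] x nz by (auto simp: gam_iff)
    have "s (inf (nmul k x) u) = 0" for k
    proof (induct k)
      case 0 thus ?case using u_pos st_zero[OF s] by (simp add: inf_absorb1)
    next
      case (Suc k)
      have "s (inf (nmul (Suc k) x) u) = gam_oplus e (s x) (s (inf (nmul k x) u))"
        unfolding t_suc[OF x] by (rule st_oplus[OF s x t_gam[OF x]])
      thus ?case using Suc sx e0 unfolding gam_oplus_def by (simp add: inf_absorb1)
    qed
    hence "s u = 0" using n by (metis inf_absorb2)
    thus False using st_u[OF s] e0 by simp
  qed
  thus ?thesis unfolding state_ker_def using zero_gam st_zero[OF s] by auto
qed

lemma zero_ideal: "gam_ideal u {0}"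
  unfolding gam_ideal_def using zero_gam u_pos by (auto simp: gam_iff gam_oplus_def inf_absorb1 antisym)

lemma zero_max: "gam_maximal_ideal u {0}"
  unfolding gam_maximal_ideal_def
proof (intro conjI allI impI)
  show "gam_ideal u {0}" by (rule zero_ideal)
  show "{0} \<noteq> Gam u" using u_gam u_pos by (metis less_irrefl singletonD)
next
  fix J assume J: "gam_ideal u J \<and> J \<noteq> Gam u \<and> {0} \<subseteq> J"
  have "x = 0" if x: "x \<in> J" for x
  proof (rule ccontr)
    assume nz: "x \<noteq> 0"
    have xg: "x \<in> Gam u" using J x unfolding gam_ideal_def by auto
    obtain n where n: "u \<le> nmul n x" using gam_nz_su[of x u] xg nz by (auto simp: gam_iff)
    have "inf (nmul k x) u \<in> J" for k
    proof (induct k)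
      case 0 thus ?case using J u_pos by (simp add: inf_absorb1)
    next
      case (Suc k)
      thus ?case unfolding t_suc[OF xg] using J x unfolding gam_ideal_def by blast
    qed
    hence uJ: "u \<in> J" using n by (metis inf_absorb2)
    have "Gam u \<subseteq> J" using J uJ unfolding gam_ideal_def by (auto simp: gam_iff)
    moreover have "J \<subseteq> Gam u" using J unfolding gam_ideal_def by auto
    ultimately show False using J by auto
  qed
  thus "J = {0}" using J by auto
qed

lemma phi_range: "x \<in> Gam u \<Longrightarrow> 0 \<le> phi x \<and> phi x \<le> 1"
proof -
  assume x: "x \<in> Gam u"
  have x0: "0 \<le> x" using x by (simp add: gam_iff)
  have "real 0 / real 1 \<le> phi x" by (rule phi_lower[OF x0]) (use x0 in auto)
  moreover have "phi x \<le> real 1 / real 1" by (rule phi_upper[OF x0]) (use x in \<open>auto simp: gam_iff\<close>)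
  ultimately show ?thesis by simp
qed

lemma phi_u: "phi u = 1"
proof -
  have u0: "0 \<le> u" using u_pos by simp
  have "real 1 / real 1 \<le> phi u" by (rule phi_lower[OF u0]) auto
  moreover have "phi u \<le> real 1 / real 1" by (rule phi_upper[OF u0]) auto
  ultimately show ?thesis by simp
qed

lemma phi_state: "riesz_unit e \<Longrightarrow> R_state u e (\<lambda>x. phi x *\<^sub>R e)"
proof -
  assume e: "riesz_unit e"
  have e0: "0 \<le> e" using e by (simp add: riesz_unit_def less_imp_le)
  have 1: "phi x *\<^sub>R e \<in> Gam e" if x: "x \<in> Gam u" for x
  proof -
    have p: "0 \<le> phi x" "phi x \<le> 1" using phi_range[OF x] by auto
    have "phi x *\<^sub>R e \<le> 1 *\<^sub>R e" by (rule scaleR_right_mono[OF p(2) e0])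
    thus ?thesis using p e0 by (simp add: Gam_def scaleR_nonneg_nonneg)
  qed
  have 2: "phi (gam_oplus u x y) *\<^sub>R e = phi x *\<^sub>R e + phi y *\<^sub>R e"
    if x: "x \<in> Gam u" and y: "y \<in> Gam u" and o: "gam_odot u x y = 0" for x y
  proof -
    have le: "x + y \<le> u" by (rule odot_zero_imp[OF o])
    have "phi (gam_oplus u x y) = phi x + phi y"
      unfolding oplus_le[OF le] using x y by (simp add: gam_iff phi_add)
    thus ?thesis by (simp add: scaleR_add_left)
  qed
  show ?thesis unfolding R_state_def using 1 2 phi_u by auto
qed

end


theorem proposition3p14:
  fixes u :: "'g::{group_add,lattice}"
    and e :: "'r::{ordered_real_vector,lattice}"
  assumes "unital_lgroup u"
    and "\<forall>x\<in>Gam u. x \<noteq> 0 \<longrightarrow> strong_unit x"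
  shows "gam_is_MV u \<and>
    (riesz_unit e \<longrightarrow>
       (\<exists>s. R_state u e s) \<and>
       (\<forall>s. R_state u e s \<longrightarrow>
            R_state_morphism u e s \<and> gam_maximal_ideal u (state_ker u s)) \<and>
       (riesz_archimedean TYPE('r) \<longrightarrow>
            (\<exists>s. R_state u e s \<and>
                 (\<forall>s'. R_state u e s' \<longrightarrow> (\<forall>x\<in>Gam u. s' x = s x)))))"
proof -
  interpret hyp u using assms by (rule hyp.intro)
  have A: "(\<exists>s. R_state u e s) \<and>
       (\<forall>s. R_state u e s \<longrightarrow>
            R_state_morphism u e s \<and> gam_maximal_ideal u (state_ker u s)) \<and>
       (riesz_archimedean TYPE('r) \<longrightarrow>
            (\<exists>s. R_state u e s \<and>
                 (\<forall>s'. R_state u e s' \<longrightarrow> (\<forall>x\<in>Gam u. s' x = s x))))"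
    if e: "riesz_unit e"
  proof (intro conjI allI impI)
    show "\<exists>s. R_state u e s" using phi_state[OF e] by blast
  next
    fix s assume s: "R_state u e s"
    show "R_state_morphism u e s" by (rule st_morph[OF s])
    show "gam_maximal_ideal u (state_ker u s)" using st_ker[OF e s] zero_max by simp
  next
    assume ar: "riesz_archimedean TYPE('r)"
    show "\<exists>s. R_state u e s \<and> (\<forall>s'. R_state u e s' \<longrightarrow> (\<forall>x\<in>Gam u. s' x = s x))"
      using phi_state[OF e] st_unique[OF ar] by (metis antisym)
  qed
  show ?thesis using isMV A by blast
qed

end
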